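(* Let $r\ge 2$, let $H$ be a digraph (possibly with loops), let $D$ be an $H$-colored $r$-partite tournament, let $k \geq 5$, and let $(u,v)$ be an arc of $C_{H}^{k-1}(D)$. If $(u,v)$ is an asymmetric arc of $C_{H}^{k-1}(D)$ (i.e., $(v,u)\notin A(C_{H}^{k-1}(D))$), then $d_{D}(u,v) \leq 2$.
   Context: All digraphs are finite. An $r$-partite tournament is a digraph whose vertex set is partitioned into $r$ disjoint independent sets such that every two vertices in different classes are joined by exactly one arc (an asymmetric arc). $d_D(u,v)$ is the length of a shortest directed $uv$-path in $D$. $D$ has no loops and comes with a map $\rho: A(D)\to V(H)$. For a walk $W=(x_0,\ldots,x_n)$ in $D$, there is an obstruction on $x_i$ if $(\rho(x_{i-1},x_i),\rho(x_i,x_{i+1})) \notin A(H)$; for an open walk this is considered at internal vertices $x_i$, $1\le i\le n-1$, for a closed walk at all $i\in\{0,\ldots,n-1\}$ with indices modulo $n$. $O_H(W)$ is the set of indices with an obstruction; the $H$-length is $l_H(W)=|O_H(W)|+1$ for open $W$ and $|O_H(W)|$ for closed $W$. The $(k-1,H)$-closure $C_H^{k-1}(D)$ is the digraph on $V(D)$ in which $(x,y)$ is an arc iff there is a directed $xy$-path in $D$ of $H$-length at most $k-1$. *)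

theory Defs
  imports Main "HOL-Library.Extended_Nat"
begin

definition digraph :: "'a set \<Rightarrow> ('a \<times> 'a) set \<Rightarrow> bool" where
  "digraph V A \<longleftrightarrow> finite V \<and> A \<subseteq> V \<times> V"

definition r_partite_tournament :: "nat \<Rightarrow> 'a set \<Rightarrow> ('a \<times> 'a) set \<Rightarrow> bool" where
  "r_partite_tournament r V A \<longleftrightarrow> digraph V A \<and>
     (\<exists>P :: nat \<Rightarrow> 'a set.
        (\<forall>i<r. P i \<noteq> {}) \<and>
        (\<forall>i<r. \<forall>j<r. i \<noteq> j \<longrightarrow> P i \<inter> P j = {}) \<and>
        (\<Union>i<r. P i) = V \<and>
        (\<forall>i<r. \<forall>x\<in>P i. \<forall>y\<in>P i. (x, y) \<notin> A) \<and>
        (\<forall>i<r. \<forall>j<r. i \<noteq> j \<longrightarrow> (\<forall>x\<in>P i. \<forall>y\<in>P j.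
            ((x, y) \<in> A \<longleftrightarrow> (y, x) \<notin> A))))"

definition H_colored :: "'a set \<Rightarrow> ('a \<times> 'a) set \<Rightarrow> 'c set \<Rightarrow> ('c \<times> 'c) set
    \<Rightarrow> ('a \<times> 'a \<Rightarrow> 'c) \<Rightarrow> bool" where
  "H_colored V A VH AH \<rho> \<longleftrightarrow> digraph V A \<and> digraph VH AH \<and> (\<forall>e\<in>A. \<rho> e \<in> VH)"

(* a directed walk (x_0, ..., x_n), n \<ge> 1, given as the list of its vertices *)
definition dwalk :: "('a \<times> 'a) set \<Rightarrow> 'a list \<Rightarrow> bool" where
  "dwalk A p \<longleftrightarrow> 2 \<le> length p \<and> (\<forall>i. i + 1 < length p \<longrightarrow> (p ! i, p ! (i + 1)) \<in> A)"

definition dpath :: "('a \<times> 'a) set \<Rightarrow> 'a \<Rightarrow> 'a \<Rightarrow> 'a list \<Rightarrow> bool" where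
  "dpath A x y p \<longleftrightarrow> dwalk A p \<and> distinct p \<and> hd p = x \<and> last p = y"

definition obstructions :: "('c \<times> 'c) set \<Rightarrow> ('a \<times> 'a \<Rightarrow> 'c) \<Rightarrow> 'a list \<Rightarrow> nat set" where
  "obstructions AH \<rho> p = {i. 1 \<le> i \<and> i + 1 < length p \<and>
      (\<rho> (p ! (i - 1), p ! i), \<rho> (p ! i, p ! (i + 1))) \<notin> AH}"

definition H_length :: "('c \<times> 'c) set \<Rightarrow> ('a \<times> 'a \<Rightarrow> 'c) \<Rightarrow> 'a list \<Rightarrow> nat" where
  "H_length AH \<rho> p = card (obstructions AH \<rho> p) + 1"

definition closure_arcs :: "'a set \<Rightarrow> ('a \<times> 'a) set \<Rightarrow> ('c \<times> 'c) set \<Rightarrow> ('a \<times> 'a \<Rightarrow> 'c)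
    \<Rightarrow> nat \<Rightarrow> ('a \<times> 'a) set" where
  "closure_arcs V A AH \<rho> k = {(x, y). x \<in> V \<and> y \<in> V \<and>
      (\<exists>p. dpath A x y p \<and> H_length AH \<rho> p \<le> k - 1)}"

(* d_D(u,v): length of a shortest directed uv-path (\<infinity> if none) *)
definition ddist :: "('a \<times> 'a) set \<Rightarrow> 'a \<Rightarrow> 'a \<Rightarrow> enat" where
  "ddist A u v = (if u = v then 0 else
      Inf {enat (length p - 1) | p. dpath A u v p})"

end

theory Submission
  imports Defs
begin

lemma succ_nth: "successively R xs \<longleftrightarrow> (\<forall>i. i + 1 < length xs \<longrightarrow> R (xs ! i) (xs ! (i + 1)))"
proof (induction xs)
  case Nil then show ?case by simp
next
  case (Cons a xs)
  show ?case
  proof (cases xs)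
    case Nil then show ?thesis by simp
  next
    case (Cons b ys)
    have "successively R (a # xs) \<longleftrightarrow> R a b \<and> successively R xs" using Cons by simp
    also have "\<dots> \<longleftrightarrow> (\<forall>i. i + 1 < length (a # xs) \<longrightarrow> R ((a # xs) ! i) ((a # xs) ! (i + 1)))"
      unfolding Cons.IH
    proof safe
      fix i assume "R a b" "\<forall>i. i + 1 < length xs \<longrightarrow> R (xs ! i) (xs ! (i + 1))" "i + 1 < length (a # xs)"
      then show "R ((a # xs) ! i) ((a # xs) ! (i + 1))" using Cons by (cases i) auto
    next
      assume "\<forall>i. i + 1 < length (a # xs) \<longrightarrow> R ((a # xs) ! i) ((a # xs) ! (i + 1))"
      from this[rule_format, of 0] show "R a b" using Cons by simp
    next
      fix i assume "\<forall>i. i + 1 < length (a # xs) \<longrightarrow> R ((a # xs) ! i) ((a # xs) ! (i + 1))" "i + 1 < length xs"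
      then show "R (xs ! i) (xs ! (i + 1))" by (metis Suc_eq_plus1 Suc_less_eq length_Cons nth_Cons_Suc)
    qed
    finally show ?thesis .
  qed
qed

lemma dwalk_succ: "dwalk A p \<longleftrightarrow> 2 \<le> length p \<and> successively (\<lambda>x y. (x, y) \<in> A) p"
  unfolding dwalk_def succ_nth by simp

lemma H_length_le: "2 \<le> length p \<Longrightarrow> H_length AH \<rho> p \<le> length p - 1"
proof -
  assume "2 \<le> length p"
  have "obstructions AH \<rho> p \<subseteq> {1..<length p - 1}" unfolding obstructions_def by auto
  then have "card (obstructions AH \<rho> p) \<le> length p - 2"
    by (metis card_atLeastLessThan card_mono diff_diff_left finite_atLeastLessThan one_add_one)
  then show ?thesis unfolding H_length_def using \<open>2 \<le> length p\<close> by simp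
qed

theorem lemma24:
  fixes V :: "'a set" and A :: "('a \<times> 'a) set"
    and VH :: "'c set" and AH :: "('c \<times> 'c) set"
    and \<rho> :: "'a \<times> 'a \<Rightarrow> 'c" and r k :: nat and u v :: 'a
  assumes "2 \<le> r"
    and "r_partite_tournament r V A"
    and "H_colored V A VH AH \<rho>"
    and "5 \<le> k"
    and "(u, v) \<in> closure_arcs V A AH \<rho> k"
    and "(v, u) \<notin> closure_arcs V A AH \<rho> k"
  shows "ddist A u v \<le> 2"
proof (cases "u = v")
  case True then show ?thesis unfolding ddist_def by simp
next
  case uv: False
  from assms(2) obtain P :: "nat \<Rightarrow> 'a set" where
    disj: "\<forall>i<r. \<forall>j<r. i \<noteq> j \<longrightarrow> P i \<inter> P j = {}" and
    cov: "(\<Union>i<r. P i) = V" and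
    ind: "\<forall>i<r. \<forall>x\<in>P i. \<forall>y\<in>P i. (x, y) \<notin> A" and
    tour: "\<forall>i<r. \<forall>j<r. i \<noteq> j \<longrightarrow> (\<forall>x\<in>P i. \<forall>y\<in>P j. ((x, y) \<in> A \<longleftrightarrow> (y, x) \<notin> A))" and
    dg: "digraph V A"
    unfolding r_partite_tournament_def by blast
  define same where "same x y \<longleftrightarrow> (\<exists>i<r. x \<in> P i \<and> y \<in> P i)" for x y
  have AV: "(x, y) \<in> A \<Longrightarrow> x \<in> V \<and> y \<in> V" for x y using dg unfolding digraph_def by auto
  have N: "(x, y) \<in> A \<Longrightarrow> \<not> same x y" for x y using ind unfolding same_def by blast
  have T: "x \<in> V \<Longrightarrow> y \<in> V \<Longrightarrow> \<not> same x y \<Longrightarrow> (x, y) \<notin> A \<Longrightarrow> (y, x) \<in> A" for x y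
  proof -
    assume "x \<in> V" "y \<in> V" "\<not> same x y" "(x, y) \<notin> A"
    then obtain i j where "i < r" "j < r" "x \<in> P i" "y \<in> P j" using cov by blast
    moreover have "i \<noteq> j" using calculation \<open>\<not> same x y\<close> unfolding same_def by blast
    ultimately show "(y, x) \<in> A" using tour \<open>(x, y) \<notin> A\<close> by blast
  qed
  have TR: "same x y \<Longrightarrow> same y z \<Longrightarrow> same x z" for x y z
    using disj unfolding same_def by blast
  have SYM: "same x y \<Longrightarrow> same y x" for x y unfolding same_def by blast
  have uV: "u \<in> V" and vV: "v \<in> V" using assms(5) unfolding closure_arcs_def by auto
  from assms(5) obtain p0 where "dpath A u v p0" unfolding closure_arcs_def by auto
  then obtain p where pp: "dpath A u v p" and pmin: "\<And>p'. dpath A u v p' \<Longrightarrow> length p \<le> length p'"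
    using ex_has_least_nat[of "dpath A u v" p0 length] by blast
  have k4: "4 \<le> k - 1" using assms(4) by simp
  have noback: "\<And>q. dpath A v u q \<Longrightarrow> length q \<le> 5 \<Longrightarrow> False"
  proof -
    fix q assume "dpath A v u q" "length q \<le> 5"
    then have "H_length AH \<rho> q \<le> k - 1" using H_length_le[of q AH \<rho>] k4
      unfolding dpath_def dwalk_def by linarith
    then show False using assms(6) uV vV \<open>dpath A v u q\<close> unfolding closure_arcs_def by blast
  qed
  have "length p \<le> 3"
  proof (rule ccontr)
    assume "\<not> length p \<le> 3"
    then obtain x1 x2 q where p: "p = u # x1 # x2 # q" and "q \<noteq> []"
      using pp unfolding dpath_def
      by (cases p; cases "tl p"; cases "tl (tl p)"; auto)
    have lv: "last q = v" using pp p \<open>q \<noteq> []\<close> unfolding dpath_def by simp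
    have dist: "distinct (u # x1 # x2 # q)" using pp p unfolding dpath_def by simp
    have S: "successively (\<lambda>x y. (x, y) \<in> A) (u # x1 # x2 # q)" using pp p
      unfolding dpath_def dwalk_succ by simp
    have a1: "(u, x1) \<in> A" and a2: "(x1, x2) \<in> A" and a3: "(x2, hd q) \<in> A"
      and Sq: "successively (\<lambda>x y. (x, y) \<in> A) q"
      using S \<open>q \<noteq> []\<close> by (auto simp: successively_Cons neq_Nil_conv)
    have short: "\<And>p'. dpath A u v p' \<Longrightarrow> length p' < length p \<Longrightarrow> False" using pmin by force
    have "(u, v) \<notin> A"
    proof
      assume "(u, v) \<in> A"
      then have "dpath A u v [u, v]" using uv unfolding dpath_def dwalk_def by auto
      then show False using short[of "[u, v]"] p by simp
    qed
    have "(v, u) \<notin> A"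
    proof
      assume "(v, u) \<in> A"
      then have "dpath A v u [v, u]" using uv unfolding dpath_def dwalk_def by auto
      then show False using noback by fastforce
    qed
    then have suv: "same u v" using T uV vV \<open>(u, v) \<notin> A\<close> by blast
    have x1V: "x1 \<in> V" "x2 \<in> V" using AV a1 a2 by auto
    have "(x1, v) \<notin> A"
    proof
      assume "(x1, v) \<in> A"
      then have "dpath A u v [u, x1, v]" using a1 dist lv \<open>q \<noteq> []\<close>
        unfolding dpath_def dwalk_succ by auto
      then show False using short[of "[u, x1, v]"] p \<open>q \<noteq> []\<close> by simp
    qed
    moreover have "\<not> same x1 v" using N[OF a1] suv TR SYM by blast
    ultimately have vx1: "(v, x1) \<in> A" using T x1V vV by blast
    have "(u, x2) \<notin> A"
    proof
      assume "(u, x2) \<in> A"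
      then have "dpath A u v (u # x2 # q)" using a3 Sq dist lv \<open>q \<noteq> []\<close>
        unfolding dpath_def dwalk_succ by (auto simp: successively_Cons)
      then show False using short[of "u # x2 # q"] p by simp
    qed
    show False
    proof (cases "same u x2")
      case False
      then have "(x2, u) \<in> A" using T uV x1V \<open>(u, x2) \<notin> A\<close> by blast
      then have "dpath A v u [v, x1, x2, u]" using vx1 a2 dist lv \<open>q \<noteq> []\<close>
        unfolding dpath_def dwalk_succ by auto
      then show False using noback by fastforce
    next
      case True
      obtain x3 q' where q: "q = x3 # q'" using \<open>q \<noteq> []\<close> by (cases q) auto
      have "q' \<noteq> []"
      proof
        assume "q' = []"
        then have "(x2, v) \<in> A" using a3 q lv by simp
        then show False using N True suv TR SYM by blast
      qed
      have x3V: "x3 \<in> V" using AV a3 q by auto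
      have a3': "(x2, x3) \<in> A" using a3 q by simp
      have Sq': "successively (\<lambda>x y. (x, y) \<in> A) q'" using Sq q by (cases q') auto
      have a4: "(x3, hd q') \<in> A" using Sq q \<open>q' \<noteq> []\<close> by (cases q') auto
      have "(u, x3) \<notin> A"
      proof
        assume "(u, x3) \<in> A"
        then have "dpath A u v (u # x3 # q')" using a4 Sq' dist lv q \<open>q' \<noteq> []\<close>
          unfolding dpath_def dwalk_succ by (auto simp: successively_Cons)
        then show False using short[of "u # x3 # q'"] p q by simp
      qed
      moreover have "\<not> same u x3" using N[OF a3'] True TR SYM by blast
      ultimately have "(x3, u) \<in> A" using T uV x3V by blast
      then have "dpath A v u [v, x1, x2, x3, u]" using vx1 a2 a3' dist lv q \<open>q' \<noteq> []\<close>
        unfolding dpath_def dwalk_succ by auto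
      then show False using noback by fastforce
    qed
  qed
  then have "ddist A u v \<le> enat (length p - 1)" unfolding ddist_def using uv pp
    by (auto intro!: Inf_lower)
  also have "\<dots> \<le> 2" using \<open>length p \<le> 3\<close> by (simp add: numeral_eq_enat)
  finally show ?thesis .
qed

end
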